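(* Let $G=(V,E,s_0,s_1)$ be a switch graph and $o,d\in V$ with $o\neq d$. Then $\textsc{Run}(G,o,d)$ terminates if and only if there exists an integral solution $\mathbf{x}\in\mathbb{N}_0^E$ satisfying, for all $v\in V$, (a) $\sum_{e\in E^+(v)}x_e-\sum_{e\in E^-(v)}x_e$ equals $1$ if $v=o$, $-1$ if $v=d$, and $0$ otherwise, and (b) $0\le x_{(v,s_1(v))}\le x_{(v,s_0(v))}\le x_{(v,s_1(v))}+1$. In this case, the run profile $\mathbf{x}(G,o,d)$ is the unique integral solution that minimizes $\Sigma(\mathbf{x})=\sum_{e\in E}x_e$ subject to constraints (a) and (b).
   Context: A switch graph is a 4-tuple $G=(V,E,s_0,s_1)$ where $V$ is a finite vertex set, $s_0,s_1:V\to V$, and $E=\{(v,s_0(v)):v\in V\}\cup\{(v,s_1(v)):v\in V\}$ (loops allowed; possibly $s_0(v)=s_1(v)$). For $v\in V$, $E^+(v)$ and $E^-(v)$ denote the outgoing and incoming edges of $v$. The procedure $\textsc{Run}(G,o,d)$: maintain arrays $\mathtt{s\_curr},\mathtt{s\_next}$ indexed by $V$, initially $\mathtt{s\_curr}[v]=s_0(v)$, $\mathtt{s\_next}[v]=s_1(v)$; set $v:=o$; while $v\neq d$: $w:=\mathtt{s\_curr}[v]$, swap $\mathtt{s\_curr}[v],\mathtt{s\_next}[v]$, $v:=w$ (traversing edge $(v,w)$). When the run terminates, its run profile $\mathbf{x}(G,o,d):E\to\mathbb{N}_0$ assigns to each edge the number of times it was traversed. *)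

theory Defs
  imports Main
begin

text \<open>Switch graph on the finite vertex type 'v (V = UNIV), given by s0, s1 :: 'v => 'v.
  Edges are pairs (v,w); the edge set is E = {(v, s0 v)} \<union> {(v, s1 v)}.\<close>

definition sw_edges :: "('v \<Rightarrow> 'v) \<Rightarrow> ('v \<Rightarrow> 'v) \<Rightarrow> ('v \<times> 'v) set" where
  "sw_edges s0 s1 = {(v, s0 v) | v. True} \<union> {(v, s1 v) | v. True}"

definition out_edges :: "('v \<Rightarrow> 'v) \<Rightarrow> ('v \<Rightarrow> 'v) \<Rightarrow> 'v \<Rightarrow> ('v \<times> 'v) set" where
  "out_edges s0 s1 v = {e \<in> sw_edges s0 s1. fst e = v}"

definition in_edges :: "('v \<Rightarrow> 'v) \<Rightarrow> ('v \<Rightarrow> 'v) \<Rightarrow> 'v \<Rightarrow> ('v \<times> 'v) set" where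
  "in_edges s0 s1 v = {e \<in> sw_edges s0 s1. snd e = v}"

definition run_step :: "'v \<times> ('v \<Rightarrow> 'v) \<times> ('v \<Rightarrow> 'v) \<Rightarrow> 'v \<times> ('v \<Rightarrow> 'v) \<times> ('v \<Rightarrow> 'v)" where
  "run_step st = (case st of (v, cur, nxt) \<Rightarrow> (cur v, cur(v := nxt v), nxt(v := cur v)))"

definition run_state :: "('v \<Rightarrow> 'v) \<Rightarrow> ('v \<Rightarrow> 'v) \<Rightarrow> 'v \<Rightarrow> nat \<Rightarrow> 'v \<times> ('v \<Rightarrow> 'v) \<times> ('v \<Rightarrow> 'v)" where
  "run_state s0 s1 a k = (run_step ^^ k) (a, s0, s1)"

definition run_pos :: "('v \<Rightarrow> 'v) \<Rightarrow> ('v \<Rightarrow> 'v) \<Rightarrow> 'v \<Rightarrow> nat \<Rightarrow> 'v" where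
  "run_pos s0 s1 a k = fst (run_state s0 s1 a k)"

definition run_terminates :: "('v \<Rightarrow> 'v) \<Rightarrow> ('v \<Rightarrow> 'v) \<Rightarrow> 'v \<Rightarrow> 'v \<Rightarrow> bool" where
  "run_terminates s0 s1 a d = (\<exists>k. run_pos s0 s1 a k = d)"

definition run_length :: "('v \<Rightarrow> 'v) \<Rightarrow> ('v \<Rightarrow> 'v) \<Rightarrow> 'v \<Rightarrow> 'v \<Rightarrow> nat" where
  "run_length s0 s1 a d = (LEAST k. run_pos s0 s1 a k = d)"

definition run_profile :: "('v \<Rightarrow> 'v) \<Rightarrow> ('v \<Rightarrow> 'v) \<Rightarrow> 'v \<Rightarrow> 'v \<Rightarrow> 'v \<times> 'v \<Rightarrow> nat" where
  "run_profile s0 s1 a d e =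
     card {i. i < run_length s0 s1 a d \<and> (run_pos s0 s1 a i, run_pos s0 s1 a (Suc i)) = e}"

definition switch_feasible :: "('v \<Rightarrow> 'v) \<Rightarrow> ('v \<Rightarrow> 'v) \<Rightarrow> 'v \<Rightarrow> 'v \<Rightarrow> ('v \<times> 'v \<Rightarrow> nat) \<Rightarrow> bool" where
  "switch_feasible s0 s1 a d x \<longleftrightarrow>
     (\<forall>e. e \<notin> sw_edges s0 s1 \<longrightarrow> x e = 0) \<and>
     (\<forall>v. int (\<Sum>e\<in>out_edges s0 s1 v. x e) - int (\<Sum>e\<in>in_edges s0 s1 v. x e)
            = (if v = a then 1 else if v = d then -1 else 0)) \<and>
     (\<forall>v. x (v, s1 v) \<le> x (v, s0 v) \<and> x (v, s0 v) \<le> x (v, s1 v) + 1)"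

definition total_flow :: "('v \<Rightarrow> 'v) \<Rightarrow> ('v \<Rightarrow> 'v) \<Rightarrow> ('v \<times> 'v \<Rightarrow> nat) \<Rightarrow> nat" where
  "total_flow s0 s1 x = (\<Sum>e\<in>sw_edges s0 s1. x e)"

end

theory Submission
  imports Defs
begin

primrec cnt :: "('v \<Rightarrow> 'v) \<Rightarrow> ('v \<Rightarrow> 'v) \<Rightarrow> 'v \<Rightarrow> nat \<Rightarrow> 'v \<Rightarrow> nat" where
  "cnt s0 s1 a 0 v = 0"
| "cnt s0 s1 a (Suc n) v = cnt s0 s1 a n v + (if run_pos s0 s1 a n = v then 1 else 0)"

definition T :: "('v \<Rightarrow> 'v) \<Rightarrow> ('v \<Rightarrow> 'v) \<Rightarrow> 'v \<Rightarrow> nat \<Rightarrow> 'v \<times> 'v \<Rightarrow> nat" where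
  "T s0 s1 a n e = card {i. i < n \<and> (run_pos s0 s1 a i, run_pos s0 s1 a (Suc i)) = e}"

lemma card_Suc_gen:
  "card {i. i < Suc n \<and> P i} = card {i. i < n \<and> P i} + (if P n then 1 else 0)"
proof (cases "P n")
  case True
  then have "{i. i < Suc n \<and> P i} = insert n {i. i < n \<and> P i}" by (auto simp: less_Suc_eq)
  then show ?thesis using True by simp
next
  case False
  then have "{i. i < Suc n \<and> P i} = {i. i < n \<and> P i}" by (auto simp: less_Suc_eq)
  then show ?thesis using False by simp
qed

lemma T_0[simp]: "T s0 s1 a 0 e = 0" by (simp add: T_def)

lemma T_Suc: "T s0 s1 a (Suc n) e = T s0 s1 a n e +
  (if (run_pos s0 s1 a n, run_pos s0 s1 a (Suc n)) = e then 1 else 0)"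
  unfolding T_def by (rule card_Suc_gen)

lemma state: "run_state s0 s1 a n = (run_pos s0 s1 a n,
   (\<lambda>v. if even (cnt s0 s1 a n v) then s0 v else s1 v),
   (\<lambda>v. if even (cnt s0 s1 a n v) then s1 v else s0 v))"
proof (induction n)
  case 0
  then show ?case by (simp add: run_state_def run_pos_def)
next
  case (Suc n)
  have rs: "run_state s0 s1 a (Suc n) = run_step (run_state s0 s1 a n)" by (simp add: run_state_def)
  have p: "run_pos s0 s1 a (Suc n) = fst (run_state s0 s1 a (Suc n))" by (simp add: run_pos_def)
  show ?case
    apply (subst p)
    apply (subst rs)+
    apply (subst Suc.IH)+
    by (auto simp: run_step_def fun_eq_iff)
qed

lemma step: "run_pos s0 s1 a (Suc n) =
  (if even (cnt s0 s1 a n (run_pos s0 s1 a n)) then s0 (run_pos s0 s1 a n) else s1 (run_pos s0 s1 a n))"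
proof -
  have rs: "run_state s0 s1 a (Suc n) = run_step (run_state s0 s1 a n)" by (simp add: run_state_def)
  have p: "run_pos s0 s1 a (Suc n) = fst (run_state s0 s1 a (Suc n))" by (simp add: run_pos_def)
  show ?thesis
    apply (subst p)
    apply (subst rs)
    apply (subst state)
    by (simp add: run_step_def)
qed

lemma pos0[simp]: "run_pos s0 s1 a 0 = a" by (simp add: run_pos_def run_state_def)

lemma edge_in: "(run_pos s0 s1 a n, run_pos s0 s1 a (Suc n)) \<in> sw_edges s0 s1"
  by (subst step) (auto simp: sw_edges_def)

lemma out_eq: "out_edges s0 s1 v = {(v, s0 v), (v, s1 v)}"
  by (auto simp: out_edges_def sw_edges_def)

lemma TS: "(s0 v \<noteq> s1 v \<longrightarrow> T s0 s1 a n (v, s0 v) = (cnt s0 s1 a n v + 1) div 2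
       \<and> T s0 s1 a n (v, s1 v) = cnt s0 s1 a n v div 2)
     \<and> (s0 v = s1 v \<longrightarrow> T s0 s1 a n (v, s0 v) = cnt s0 s1 a n v)"
proof (induction n)
  case 0 then show ?case by simp
next
  case (Suc n)
  show ?case
  proof (cases "run_pos s0 s1 a n = v")
    case True
    then show ?thesis using Suc.IH
      by (simp add: T_Suc step) presburger?
  next
    case False
    then show ?thesis using Suc.IH by (simp add: T_Suc)
  qed
qed

lemma out_mem: "(p, q) \<in> sw_edges s0 s1 \<Longrightarrow> ((p,q) \<in> out_edges s0 s1 v) = (p = v)"
  by (auto simp: out_edges_def)
lemma in_mem: "(p, q) \<in> sw_edges s0 s1 \<Longrightarrow> ((p,q) \<in> in_edges s0 s1 v) = (q = v)"
  by (auto simp: in_edges_def)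

lemma flow:
  fixes s0 s1 :: "'v::finite \<Rightarrow> 'v"
  shows "int (\<Sum>e\<in>out_edges s0 s1 v. T s0 s1 a n e) - int (\<Sum>e\<in>in_edges s0 s1 v. T s0 s1 a n e)
   = (if a = v then 1 else 0) - (if run_pos s0 s1 a n = v then 1 else 0)"
proof (induction n)
  case 0 then show ?case by simp
next
  case (Suc n)
  let ?p = "run_pos s0 s1 a n" and ?q = "run_pos s0 s1 a (Suc n)"
  have E: "(?p, ?q) \<in> sw_edges s0 s1" by (rule edge_in)
  have o: "(\<Sum>e\<in>out_edges s0 s1 v. T s0 s1 a (Suc n) e) = (\<Sum>e\<in>out_edges s0 s1 v. T s0 s1 a n e) + (if ?p = v then 1 else 0)"
    by (simp add: T_Suc sum.distrib out_mem[OF E])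
  have i: "(\<Sum>e\<in>in_edges s0 s1 v. T s0 s1 a (Suc n) e) = (\<Sum>e\<in>in_edges s0 s1 v. T s0 s1 a n e) + (if ?q = v then 1 else 0)"
    by (simp add: T_Suc sum.distrib in_mem[OF E])
  show ?case using Suc.IH o i by (smt (verit) of_nat_add of_nat_1 of_nat_0)
qed

lemma T_off: "e \<notin> sw_edges s0 s1 \<Longrightarrow> T s0 s1 a n e = 0"
  unfolding T_def using edge_in by (metis (mono_tags, lifting) Collect_empty_eq card.empty)

lemma T_total:
  fixes s0 s1 :: "'v::finite \<Rightarrow> 'v"
  shows "(\<Sum>e\<in>sw_edges s0 s1. T s0 s1 a n e) = n"
proof (induction n)
  case 0 then show ?case by simp
next
  case (Suc n)
  then show ?case using edge_in[of s0 s1 a n] by (simp add: T_Suc sum.distrib)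
qed

lemma key:
  fixes s0 s1 :: "'v::finite \<Rightarrow> 'v"
  assumes F: "switch_feasible s0 s1 a d x"
  shows "(\<forall>i<n. run_pos s0 s1 a i \<noteq> d) \<Longrightarrow> T s0 s1 a n e \<le> x e"
proof (induction n arbitrary: e)
  case 0 then show ?case by simp
next
  case (Suc n)
  define p where "p = run_pos s0 s1 a n"
  define q where "q = run_pos s0 s1 a (Suc n)"
  define c where "c = cnt s0 s1 a n p"
  have IH: "\<And>e. T s0 s1 a n e \<le> x e" using Suc by auto
  have pd: "p \<noteq> d" using Suc.prems p_def by auto
  have qstep: "q = (if even c then s0 p else s1 p)" unfolding q_def c_def p_def by (rule step)
  show ?case
  proof (cases "e = (p, q)")
    case False
    then show ?thesis using IH[of e] by (simp add: T_Suc p_def q_def)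
  next
    case True
    have "T s0 s1 a n (p, q) < x (p, q)"
    proof (rule ccontr)
      assume "\<not> ?thesis"
      then have xle: "x (p,q) \<le> T s0 s1 a n (p, q)" by simp
      note TSp = TS[of s0 p s1 a n, folded c_def]
      have b: "x (p, s1 p) \<le> x (p, s0 p) \<and> x (p, s0 p) \<le> x (p, s1 p) + 1"
        using F unfolding switch_feasible_def by blast
      have outT: "(\<Sum>e\<in>out_edges s0 s1 p. T s0 s1 a n e) = c"
        using TSp by (cases "s0 p = s1 p") (auto simp: out_eq)
      have outx: "(\<Sum>e\<in>out_edges s0 s1 p. x e) \<le> c"
      proof (cases "s0 p = s1 p")
        case True
        then have "q = s0 p" using qstep by simp
        then show ?thesis using TSp xle True by (simp add: out_eq)
      next
        case False
        then show ?thesis using TSp xle qstep b by (simp add: out_eq split: if_splits) presburger+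
      qed
      have inle: "(\<Sum>e\<in>in_edges s0 s1 p. T s0 s1 a n e) \<le> (\<Sum>e\<in>in_edges s0 s1 p. x e)"
        using IH by (simp add: sum_mono)
      have cons: "int (\<Sum>e\<in>out_edges s0 s1 p. x e) - int (\<Sum>e\<in>in_edges s0 s1 p. x e) = (if p = a then 1 else 0)"
        using F pd unfolding switch_feasible_def by auto
      have fl: "int (\<Sum>e\<in>out_edges s0 s1 p. T s0 s1 a n e) - int (\<Sum>e\<in>in_edges s0 s1 p. T s0 s1 a n e)
         = (if a = p then 1 else 0) - 1"
        using flow[where v=p and n=n and a=a] p_def by simp
      show False using outT outx inle cons fl by (cases "p = a") (simp_all del: of_nat_sum)
    qed
    then show ?thesis using True by (simp add: T_Suc p_def q_def)
  qed
qed

lemma feas_term: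
  fixes s0 s1 :: "'v::finite \<Rightarrow> 'v"
  assumes F: "switch_feasible s0 s1 a d x"
  shows "run_terminates s0 s1 a d"
proof (rule ccontr)
  assume "\<not> ?thesis"
  then have nd: "\<forall>i. run_pos s0 s1 a i \<noteq> d" by (simp add: run_terminates_def)
  let ?n = "Suc (total_flow s0 s1 x)"
  have "(\<Sum>e\<in>sw_edges s0 s1. T s0 s1 a ?n e) \<le> (\<Sum>e\<in>sw_edges s0 s1. x e)"
    by (rule sum_mono) (use key[OF F] nd in blast)
  then show False by (simp add: T_total total_flow_def)
qed

lemma before_len:
  assumes "run_terminates s0 s1 a d" "i < run_length s0 s1 a d"
  shows "run_pos s0 s1 a i \<noteq> d"
  using assms(2) unfolding run_length_def by (rule not_less_Least)

lemma at_len: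
  assumes "run_terminates s0 s1 a d"
  shows "run_pos s0 s1 a (run_length s0 s1 a d) = d"
  using assms unfolding run_length_def run_terminates_def by (rule LeastI_ex)

lemma prof: "run_profile s0 s1 a d = T s0 s1 a (run_length s0 s1 a d)"
  by (rule ext) (simp only: run_profile_def T_def)

lemma prof_feas:
  fixes s0 s1 :: "'v::finite \<Rightarrow> 'v"
  assumes t: "run_terminates s0 s1 a d" and ad: "a \<noteq> d"
  shows "switch_feasible s0 s1 a d (T s0 s1 a (run_length s0 s1 a d))"
  unfolding switch_feasible_def
proof (intro conjI allI impI)
  fix e assume "e \<notin> sw_edges s0 s1"
  then show "T s0 s1 a (run_length s0 s1 a d) e = 0" by (rule T_off)
next
  fix v
  show "int (\<Sum>e\<in>out_edges s0 s1 v. T s0 s1 a (run_length s0 s1 a d) e) -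
        int (\<Sum>e\<in>in_edges s0 s1 v. T s0 s1 a (run_length s0 s1 a d) e) =
        (if v = a then 1 else if v = d then - 1 else 0)"
    using flow[where v=v and n="run_length s0 s1 a d" and a=a] at_len[OF t] ad
    by (auto simp del: of_nat_sum)
next
  fix v
  note X = TS[where v=v and n="run_length s0 s1 a d" and a=a]
  show "T s0 s1 a (run_length s0 s1 a d) (v, s1 v) \<le> T s0 s1 a (run_length s0 s1 a d) (v, s0 v)"
    using X by (cases "s0 v = s1 v") auto
  show "T s0 s1 a (run_length s0 s1 a d) (v, s0 v) \<le> T s0 s1 a (run_length s0 s1 a d) (v, s1 v) + 1"
    using X by (cases "s0 v = s1 v") auto
qed

theorem theorem4:
  fixes s0 s1 :: "'v::finite \<Rightarrow> 'v" and a d :: 'v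
  assumes "a \<noteq> d"
  shows "(run_terminates s0 s1 a d \<longleftrightarrow> (\<exists>x. switch_feasible s0 s1 a d x)) \<and>
         (run_terminates s0 s1 a d \<longrightarrow>
            switch_feasible s0 s1 a d (run_profile s0 s1 a d) \<and>
            (\<forall>x. switch_feasible s0 s1 a d x \<and> x \<noteq> run_profile s0 s1 a d \<longrightarrow>
                 total_flow s0 s1 (run_profile s0 s1 a d) < total_flow s0 s1 x))"
proof (intro conjI impI allI iffI)
  assume t: "run_terminates s0 s1 a d"
  then show "\<exists>x. switch_feasible s0 s1 a d x" using prof_feas[OF t assms] by blast
next
  assume "\<exists>x. switch_feasible s0 s1 a d x"
  then show "run_terminates s0 s1 a d" using feas_term by blast
next
  assume t: "run_terminates s0 s1 a d"
  then show "switch_feasible s0 s1 a d (run_profile s0 s1 a d)" using prof_feas[OF t assms] prof by metis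
next
  fix x
  assume t: "run_terminates s0 s1 a d"
    and h: "switch_feasible s0 s1 a d x \<and> x \<noteq> run_profile s0 s1 a d"
  have le: "\<And>e. run_profile s0 s1 a d e \<le> x e"
    unfolding prof using key[of s0 s1 a d x] h before_len[OF t] by blast
  have "\<exists>e. run_profile s0 s1 a d e \<noteq> x e" using h by fastforce
  then obtain e where ne: "run_profile s0 s1 a d e \<noteq> x e" by blast
  have ein: "e \<in> sw_edges s0 s1"
  proof (rule ccontr)
    assume "e \<notin> sw_edges s0 s1"
    then have "x e = 0" "run_profile s0 s1 a d e = 0"
      using h T_off[of e s0 s1 a] unfolding switch_feasible_def prof by blast+
    then show False using ne by simp
  qed
  show "total_flow s0 s1 (run_profile s0 s1 a d) < total_flow s0 s1 x"
    unfolding total_flow_def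
  proof (rule sum_strict_mono_ex1)
    show "\<exists>e\<in>sw_edges s0 s1. run_profile s0 s1 a d e < x e"
      using le[of e] ne ein by (intro bexI[of _ e]) auto
  qed (use le in auto)
qed

end
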